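(* $\mathrm{Cond}(\mathrm{Rel}^+)\cong\mathrm{Rel}$. Explicitly, a morphism $(K,R,k_0):X\leadsto Y$ with $R\subseteq X\times Y\times K$ left-total in $X$ corresponds to the relation $R'=\{(x,y):(x,y,k_0)\in R\}\subseteq X\times Y$, and a relation $R'\subseteq X\times Y$ corresponds to $(\{0,1\},R'',1)$ with $(x,y,b)\in R''$ iff ($(x,y)\in R'\Leftrightarrow b=1$); these assignments are mutually inverse on $\approx$-classes.
   Context: $\mathrm{Rel}$: the CD category of sets and arbitrary relations $R\subseteq X\times Y$ (Kleisli category of the powerset monad), with relational composition, cartesian product as tensor, copy the diagonal relation and delete the total relation to a one-point set. $\mathrm{Rel}^+$: its Markov subcategory of left-total relations ($\forall x\,\exists y,\ (x,y)\in R$). Deterministic states $I\to K$ of $\mathrm{Rel}^+$ are single points $k_0\in K$. $\mathrm{Rel}^+$ has conditionals and precise supports; for a state (nonempty subset) $M\subseteq X$ and point $x$, $x\ll M$ iff $x\in M$. $\mathrm{Obs}(\mathcal C)$ for a Markov category $\mathcal C$: same objects; morphisms $X\leadsto Y$ are triples $(K,f,o)$ with $f:X\to Y\otimes K$ and $o:I\to K$ deterministic; composition $(K',f',o')\bullet(K,f,o)=(K'\otimes K,(f'\otimes\mathrm{id}_K)f,o'\otimes o)$; tensor of $(K,f,o):X\leadsto Y$, $(K',f',o'):X'\leadsto Y'$ is $(K'\otimes K,(\mathrm{id}_{Y'}\otimes\mathrm{swap}_{K',Y}\otimes\mathrm{id}_K)(f'\otimes f),o'\otimes o)$. Here $f_X$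 denotes the marginal, and for a state $\psi:I\to X\otimes K$, $\psi|_K:K\to X$ is a conditional, i.e. $\psi=\mathrm{swap}\,(\mathrm{id}_K\otimes\psi|_K)\mathrm{copy}_K\,\psi_K$. For states, $(K,\psi,o)\sim(K',\psi',o')$ iff either ($o\ll\psi_K$, $o'\ll\psi'_{K'}$ and $\psi|_Ko=\psi'|_{K'}o'$) or ($o\not\ll\psi_K$ and $o'\not\ll\psi'_{K'}$). For $F,G:X\leadsto Y$, $F\approx G$ iff for every $A$ and every state $\Psi:I\leadsto A\otimes X$, $(\mathrm{Id}_A\otimes F)\bullet\Psi\sim(\mathrm{Id}_A\otimes G)\bullet\Psi$. $\mathrm{Cond}(\mathcal C)=\mathrm{Obs}(\mathcal C)/{\approx}$, a CD category. *)

theory Defs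
  imports Main
begin

text \<open>Objects of Rel / Rel+ are carrier sets.  A morphism X -> Y of Rel is a
relation R \<subseteq> X \<times> Y; in Rel+ it is additionally left-total on X.
The monoidal unit I is the one-point set {()}.\<close>

definition relplus_mor :: "'x set \<Rightarrow> 'y set \<Rightarrow> ('x \<times> 'y) set \<Rightarrow> bool" where
  "relplus_mor X Y R \<longleftrightarrow> R \<subseteq> X \<times> Y \<and> (\<forall>x\<in>X. \<exists>y. (x, y) \<in> R)"

text \<open>Morphisms X ~> Y of Obs(Rel+): triples (K, f, p) with f : X -> Y \<otimes> K in Rel+
(encoded as a set of triples (x, y, k)) and p : I -> K deterministic, i.e. a point p \<in> K.\<close>

type_synonym ('k, 'x, 'y) obs = "'k set \<times> ('x \<times> 'y \<times> 'k) set \<times> 'k"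

definition obs_mor :: "'x set \<Rightarrow> 'y set \<Rightarrow> ('k, 'x, 'y) obs \<Rightarrow> bool" where
  "obs_mor X Y F = (case F of (K, f, p) \<Rightarrow>
      relplus_mor X (Y \<times> K) {(x, y, k). (x, y, k) \<in> f} \<and> p \<in> K)"

text \<open>Composition (K',f',p') \<bullet> (K,f,p) = (K' \<otimes> K, (f' \<otimes> id_K) f, p' \<otimes> p).\<close>
definition obs_comp :: "('k2, 'y, 'z) obs \<Rightarrow> ('k1, 'x, 'y) obs \<Rightarrow> ('k2 \<times> 'k1, 'x, 'z) obs" where
  "obs_comp G F = (case G of (K', g, p') \<Rightarrow> case F of (K, f, p) \<Rightarrow>
      (K' \<times> K, {(x, z, (k', k)). \<exists>y. (x, y, k) \<in> f \<and> (y, z, k') \<in> g}, (p', p)))"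

definition obs_id :: "'x set \<Rightarrow> (unit, 'x, 'x) obs" where
  "obs_id X = ({()}, {(x, x, ()) | x. x \<in> X}, ())"

text \<open>Tensor of (K,f,p) : X ~> Y and (K',f',p') : X' ~> Y': hidden object K \<otimes> K',
with the hidden outputs moved to the right (the order of the hidden factors is
immaterial up to the evident isomorphism).\<close>
definition obs_tensor :: "('k1, 'x1, 'y1) obs \<Rightarrow> ('k2, 'x2, 'y2) obs
      \<Rightarrow> ('k1 \<times> 'k2, 'x1 \<times> 'x2, 'y1 \<times> 'y2) obs" where
  "obs_tensor F F' = (case F of (K, f, p) \<Rightarrow> case F' of (K', f', p') \<Rightarrow>
      (K \<times> K', {((x, x'), (y, y'), (k, k')). (x, y, k) \<in> f \<and> (x', y', k') \<in> f'}, (p, p')))"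

definition obs_copy :: "'x set \<Rightarrow> (unit, 'x, 'x \<times> 'x) obs" where
  "obs_copy X = ({()}, {(x, (x, x), ()) | x. x \<in> X}, ())"

definition obs_del :: "'x set \<Rightarrow> (unit, 'x, unit) obs" where
  "obs_del X = ({()}, {(x, (), ()) | x. x \<in> X}, ())"

text \<open>States I ~> B of Obs(Rel+) are obs_mor {()} B.  Marginal on the hidden object:\<close>
definition state_marg :: "(unit \<times> 'b \<times> 'k) set \<Rightarrow> 'k set" where
  "state_marg psi = {k. \<exists>b. ((), b, k) \<in> psi}"

text \<open>c : K -> B (in Rel+) is a conditional of psi : I -> B \<otimes> K, i.e.
psi = swap (id_K \<otimes> c) copy_K psi_K.\<close>
definition is_conditional :: "'b set \<Rightarrow> 'k set \<Rightarrow> (unit \<times> 'b \<times> 'k) set \<Rightarrow> ('k \<times> 'b) set \<Rightarrow> bool" where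
  "is_conditional B K psi c \<longleftrightarrow> relplus_mor K B c \<and>
     psi = {((), b, k) | b k. k \<in> state_marg psi \<and> (k, b) \<in> c}"

text \<open>The relation ~ on states I ~> B.  In Rel+, p \<ll> M iff p \<in> M, and the
composite of a conditional c with a point p is the image c``{p}.\<close>
definition state_sim :: "'b set \<Rightarrow> ('k, unit, 'b) obs \<Rightarrow> ('k', unit, 'b) obs \<Rightarrow> bool" where
  "state_sim B S S' = (case S of (K, psi, p) \<Rightarrow> case S' of (K', psi', p') \<Rightarrow>
      (p \<in> state_marg psi \<and> p' \<in> state_marg psi' \<and>
        (\<exists>c c'. is_conditional B K psi c \<and> is_conditional B K' psi' c' \<and> c `` {p} = c' `` {p'}))
    \<or> (p \<notin> state_marg psi \<and> p' \<notin> state_marg psi'))"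

text \<open>The object A ranges over subsets of
the type 'a and the hidden object of Psi over subsets of the type 'c; these types
are parameters (fixed via itself-arguments, universally quantified at theorem level).\<close>
definition obs_approx :: "'a itself \<Rightarrow> 'c itself \<Rightarrow> 'x set \<Rightarrow> 'y set
      \<Rightarrow> ('k1, 'x, 'y) obs \<Rightarrow> ('k2, 'x, 'y) obs \<Rightarrow> bool" where
  "obs_approx _ _ X Y F G \<longleftrightarrow>
     (\<forall>(A :: 'a set) (Psi :: ('c, unit, 'a \<times> 'x) obs).
        obs_mor {()} (A \<times> X) Psi \<longrightarrow>
        state_sim (A \<times> Y) (obs_comp (obs_tensor (obs_id A) F) Psi)
                          (obs_comp (obs_tensor (obs_id A) G) Psi))"

definition to_rel :: "('k, 'x, 'y) obs \<Rightarrow> ('x \<times> 'y) set" where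
  "to_rel F = (case F of (K, R, k0) \<Rightarrow> {(x, y). (x, y, k0) \<in> R})"

definition from_rel :: "'x set \<Rightarrow> 'y set \<Rightarrow> ('x \<times> 'y) set \<Rightarrow> (nat, 'x, 'y) obs" where
  "from_rel X Y R' = ({0, 1},
     {(x, y, b). x \<in> X \<and> y \<in> Y \<and> b \<in> {0, 1} \<and> ((x, y) \<in> R' \<longleftrightarrow> b = 1)}, 1)"

definition rel_tensor :: "('x1 \<times> 'y1) set \<Rightarrow> ('x2 \<times> 'y2) set \<Rightarrow> (('x1 \<times> 'x2) \<times> ('y1 \<times> 'y2)) set" where
  "rel_tensor R S = {((x, x'), (y, y')). (x, y) \<in> R \<and> (x', y') \<in> S}"

end

theory Submission
  imports Defs
begin

lemma cond_exists:
  assumes "psi \<subseteq> UNIV \<times> B \<times> K" "b0 \<in> B"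
  shows "is_conditional B K psi ({(k, b). ((), b, k) \<in> psi} \<union> {(k, b0) | k. k \<in> K \<and> k \<notin> state_marg psi})"
  using assms unfolding is_conditional_def relplus_mor_def state_marg_def
  by auto

lemma cond_img:
  assumes "is_conditional B K psi c" "p \<in> state_marg psi"
  shows "c `` {p} = {b. ((), b, p) \<in> psi}"
proof -
  have eq: "psi = {((), b, k) | b k. k \<in> state_marg psi \<and> (k, b) \<in> c}"
    using assms(1) unfolding is_conditional_def by blast
  have "((), b, p) \<in> psi \<longleftrightarrow> ((), b, p) \<in> {((), b, k) | b k. k \<in> state_marg psi \<and> (k, b) \<in> c}" for b
    using eq by (metis (no_types, lifting))
  then show ?thesis using assms(2) by auto
qed

lemma sim_char:
  assumes "psi \<subseteq> UNIV \<times> B \<times> K" "psi' \<subseteq> UNIV \<times> B \<times> K'" "B \<noteq> {}"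
  shows "state_sim B (K, psi, p) (K', psi', p') \<longleftrightarrow> {b. ((), b, p) \<in> psi} = {b. ((), b, p') \<in> psi'}"
proof -
  obtain b0 where b0: "b0 \<in> B" using assms(3) by auto
  have m1: "p \<in> state_marg psi \<longleftrightarrow> {b. ((), b, p) \<in> psi} \<noteq> {}" unfolding state_marg_def by auto
  have m2: "p' \<in> state_marg psi' \<longleftrightarrow> {b. ((), b, p') \<in> psi'} \<noteq> {}" unfolding state_marg_def by auto
  show ?thesis
  proof
    assume "state_sim B (K, psi, p) (K', psi', p')"
    then show "{b. ((), b, p) \<in> psi} = {b. ((), b, p') \<in> psi'}"
      unfolding state_sim_def using m1 m2 by (auto dest!: cond_img)
  next
    assume eq: "{b. ((), b, p) \<in> psi} = {b. ((), b, p') \<in> psi'}"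
    show "state_sim B (K, psi, p) (K', psi', p')"
    proof (cases "p \<in> state_marg psi")
      case True
      then have T2: "p' \<in> state_marg psi'" using m1 m2 eq by simp
      have c1: "is_conditional B K psi ({(k, b). ((), b, k) \<in> psi} \<union> {(k, b0) | k. k \<in> K \<and> k \<notin> state_marg psi})"
        by (rule cond_exists[OF assms(1) b0])
      have c2: "is_conditional B K' psi' ({(k, b). ((), b, k) \<in> psi'} \<union> {(k, b0) | k. k \<in> K' \<and> k \<notin> state_marg psi'})"
        by (rule cond_exists[OF assms(2) b0])
      show ?thesis unfolding state_sim_def using True T2 c1 c2 cond_img[OF c1 True] cond_img[OF c2 T2] eq
        by auto
    next
      case False
      then have "p' \<notin> state_marg psi'" using m1 m2 eq by simp
      then show ?thesis unfolding state_sim_def using False by auto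
    qed
  qed
qed

lemma comp_shape:
  "obs_comp (obs_tensor (obs_id A) (KF, f, pF)) (K, psi, p) =
    (({()} \<times> KF) \<times> K,
     {(u, (a, w), (((), k), k')) | u a w k k'. \<exists>x. ((), (a, x), k') \<in> psi \<and> a \<in> A \<and> (x, w, k) \<in> f},
     (((), pF), p))"
  unfolding obs_comp_def obs_tensor_def obs_id_def by (auto simp: set_eq_iff)

lemma approx_iff:
  fixes F :: "('k1, 'x, 'y) obs" and G :: "('k2, 'x, 'y) obs"
  assumes ne: "X = {} \<or> Y \<noteq> {}" and mF: "obs_mor X Y F" and mG: "obs_mor X Y G"
  shows "obs_approx TYPE('a) TYPE('c) X Y F G \<longleftrightarrow> to_rel F = to_rel G"
proof -
  obtain KF f pF where F: "F = (KF, f, pF)" by (cases F) auto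
  obtain KG g pG where G: "G = (KG, g, pG)" by (cases G) auto
  have fsub: "f \<subseteq> X \<times> Y \<times> KF" "pF \<in> KF" using mF unfolding F obs_mor_def relplus_mor_def by auto
  have gsub: "g \<subseteq> X \<times> Y \<times> KG" "pG \<in> KG" using mG unfolding G obs_mor_def relplus_mor_def by auto
  have key: "state_sim (A \<times> Y) (obs_comp (obs_tensor (obs_id A) F) Psi) (obs_comp (obs_tensor (obs_id A) G) Psi)
     \<longleftrightarrow> {(a, w). \<exists>x. ((), (a, x), snd (snd Psi)) \<in> fst (snd Psi) \<and> a \<in> A \<and> (x, w) \<in> to_rel F}
       = {(a, w). \<exists>x. ((), (a, x), snd (snd Psi)) \<in> fst (snd Psi) \<and> a \<in> A \<and> (x, w) \<in> to_rel G}"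
    if mP: "obs_mor {()} (A \<times> X) (Psi :: ('c, unit, 'a \<times> 'x) obs)" for A Psi
  proof -
    obtain K psi p where P: "Psi = (K, psi, p)" by (cases Psi) auto
    have psub: "psi \<subseteq> {()} \<times> (A \<times> X) \<times> K" and pne: "\<exists>b. ((), b) \<in> {(u, b). \<exists>k. (u, b, k) \<in> psi}"
      using mP unfolding P obs_mor_def relplus_mor_def by auto
    then obtain a x where ax: "a \<in> A" "x \<in> X" by auto
    then have Yne: "Y \<noteq> {}" using ne by auto
    then have Bne: "A \<times> Y \<noteq> {}" using ax by auto
    show ?thesis unfolding P comp_shape[of A KF f pF K psi p, folded F] comp_shape[of A KG g pG K psi p, folded G]
      apply (subst sim_char[where K="({()} \<times> KF) \<times> K" and K'="({()} \<times> KG) \<times> K"])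
      using psub fsub gsub Bne apply (fastforce, fastforce, fastforce)
      unfolding to_rel_def F G by (auto simp: set_eq_iff)
  qed
  show ?thesis
  proof
    assume ap: "obs_approx TYPE('a) TYPE('c) X Y F G"
    show "to_rel F = to_rel G"
    proof (rule set_eqI, clarify)
      fix x y
      show "(x, y) \<in> to_rel F \<longleftrightarrow> (x, y) \<in> to_rel G"
      proof (cases "x \<in> X")
        case False
        then show ?thesis using fsub gsub unfolding to_rel_def F G by auto
      next
        case True
        obtain a0 :: 'a where True by auto
        obtain c0 :: 'c where True by auto
        let ?Psi = "({c0}, {((), (a0, x), c0)}, c0) :: ('c, unit, 'a \<times> 'x) obs"
        have mP: "obs_mor {()} ({a0} \<times> X) ?Psi" using True unfolding obs_mor_def relplus_mor_def by auto
        have "state_sim ({a0} \<times> Y) (obs_comp (obs_tensor (obs_id {a0}) F) ?Psi) (obs_comp (obs_tensor (obs_id {a0}) G) ?Psi)"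
          using ap mP unfolding obs_approx_def by blast
        then have "{(a, w). \<exists>x'. ((), (a, x'), c0) \<in> {((), (a0, x), c0)} \<and> a \<in> {a0} \<and> (x', w) \<in> to_rel F}
       = {(a, w). \<exists>x'. ((), (a, x'), c0) \<in> {((), (a0, x), c0)} \<and> a \<in> {a0} \<and> (x', w) \<in> to_rel G}"
          using key[OF mP] by simp
        then have "(a0, y) \<in> {(a, w). \<exists>x'. ((), (a, x'), c0) \<in> {((), (a0, x), c0)} \<and> a \<in> {a0} \<and> (x', w) \<in> to_rel F}
          \<longleftrightarrow> (a0, y) \<in> {(a, w). \<exists>x'. ((), (a, x'), c0) \<in> {((), (a0, x), c0)} \<and> a \<in> {a0} \<and> (x', w) \<in> to_rel G}"
          by simp
        then show ?thesis by simp
      qed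
    qed
  next
    assume eq: "to_rel F = to_rel G"
    show "obs_approx TYPE('a) TYPE('c) X Y F G"
      unfolding obs_approx_def using key eq by auto
  qed
qed

theorem proposition6p8:
  fixes X :: "'x set" and Y :: "'y set" and Z :: "'z set"
    and X' :: "'u set" and Y' :: "'v set"
  assumes nonempty_cod: "X = {} \<or> Y \<noteq> {}"
  shows
   "(\<forall>(F :: ('k1, 'x, 'y) obs) (G :: ('k2, 'x, 'y) obs).
        obs_mor X Y F \<and> obs_mor X Y G \<longrightarrow>
          (obs_approx TYPE('a) TYPE('c) X Y F G \<longleftrightarrow> to_rel F = to_rel G))
    \<and> (\<forall>F :: ('k1, 'x, 'y) obs. obs_mor X Y F \<longrightarrow> to_rel F \<subseteq> X \<times> Y)
    \<and> (\<forall>R'. R' \<subseteq> X \<times> Y \<longrightarrow>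
          obs_mor X Y (from_rel X Y R') \<and> to_rel (from_rel X Y R') = R')
    \<and> (\<forall>F :: ('k1, 'x, 'y) obs. obs_mor X Y F \<longrightarrow>
          obs_approx TYPE('a) TYPE('c) X Y (from_rel X Y (to_rel F)) F)
    \<and> to_rel (obs_id X) = Id_on X
    \<and> (\<forall>(F :: ('k1, 'x, 'y) obs) (G :: ('k2, 'y, 'z) obs).
          obs_mor X Y F \<and> obs_mor Y Z G \<longrightarrow> to_rel (obs_comp G F) = to_rel F O to_rel G)
    \<and> (\<forall>(F :: ('k1, 'x, 'y) obs) (F' :: ('k2, 'u, 'v) obs).
          obs_mor X Y F \<and> obs_mor X' Y' F' \<longrightarrow>
          to_rel (obs_tensor F F') = rel_tensor (to_rel F) (to_rel F'))
    \<and> to_rel (obs_copy X) = {(x, (x, x)) | x. x \<in> X}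
    \<and> to_rel (obs_del X) = X \<times> {()}"
proof -
  have sub: "to_rel F \<subseteq> X \<times> Y" if "obs_mor X Y (F :: ('k, 'x, 'y) obs)" for F
    using that unfolding obs_mor_def relplus_mor_def to_rel_def by (cases F) auto
  have fr: "obs_mor X Y (from_rel X Y R') \<and> to_rel (from_rel X Y R') = R'" if "R' \<subseteq> X \<times> Y" for R'
  proof
    show "obs_mor X Y (from_rel X Y R')"
      unfolding obs_mor_def from_rel_def relplus_mor_def prod.case
    proof (intro conjI ballI)
      fix x assume "x \<in> X"
      then obtain y where y: "y \<in> Y" using nonempty_cod by auto
      show "\<exists>y. (x, y) \<in> {(x, y, k). (x, y, k) \<in> {(x, y, b). x \<in> X \<and> y \<in> Y \<and> b \<in> {0::nat, 1} \<and> ((x, y) \<in> R') = (b = 1)}}"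
        using y \<open>x \<in> X\<close> by (cases "(x, y) \<in> R'") auto
    qed auto
    show "to_rel (from_rel X Y R') = R'" using that unfolding to_rel_def from_rel_def by auto
  qed
  show ?thesis
  proof (intro conjI allI impI)
    show "obs_approx TYPE('a) TYPE('c) X Y F G = (to_rel F = to_rel G)"
      if "obs_mor X Y F \<and> obs_mor X Y G" for F :: "('k1, 'x, 'y) obs" and G :: "('k2, 'x, 'y) obs"
      using approx_iff[OF nonempty_cod] that by blast
    show "obs_approx TYPE('a) TYPE('c) X Y (from_rel X Y (to_rel F)) F" if "obs_mor X Y F" for F :: "('k1, 'x, 'y) obs"
      using approx_iff[OF nonempty_cod _ that, of "from_rel X Y (to_rel F)"] fr[OF sub[OF that]] by blast
    show "to_rel (obs_comp G F) = to_rel F O to_rel G" for F :: "('k1, 'x, 'y) obs" and G :: "('k2, 'y, 'z) obs"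
      unfolding to_rel_def obs_comp_def by (cases F, cases G) auto
    show "to_rel (obs_tensor F F') = rel_tensor (to_rel F) (to_rel F')" for F :: "('k1, 'x, 'y) obs" and F' :: "('k2, 'u, 'v) obs"
      unfolding to_rel_def obs_tensor_def rel_tensor_def by (cases F, cases F') auto
    show "to_rel F \<subseteq> X \<times> Y" if "obs_mor X Y F" for F :: "('k1, 'x, 'y) obs" using sub that by blast
    show "obs_mor X Y (from_rel X Y R')" if "R' \<subseteq> X \<times> Y" for R' using fr that by blast
    show "to_rel (from_rel X Y R') = R'" if "R' \<subseteq> X \<times> Y" for R' using fr that by blast
  qed (auto simp: to_rel_def obs_id_def obs_copy_def obs_del_def)
qed

end
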